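(* Let $n_*>2$ be an integer, $\phi:(n_*,+\infty)\to(0,+\infty)$ strictly increasing with $\phi(n_*+1)>1$, and $\mathsf{G}\in\mathbb{G}(n_*,\phi)$. Then for all $\theta,\alpha>0$, $$\mathit{\Theta}(\alpha,\theta)\le n_*^\theta(e^\alpha+1)T_o(\alpha,\theta),$$ where $T_x(\alpha,\theta)=\sum_{y\in\mathsf{V}}[n(y)]^{1+\theta}\exp[-\alpha\rho(x,y)]$.
   Context: $\mathsf{G}=(\mathsf{V},\mathsf{E})$ is a countable, connected, locally finite undirected graph; $n(x)$ is the degree, $\rho$ the path distance, $o\in\mathsf{V}$ a fixed root. $\mathit{\Theta}(\alpha,\theta)=\sum_{x}\sum_{y\sim x}[n(x)n(y)]^\theta\exp[-\alpha\rho(o,x)]$ (values in $[0,\infty]$). For integer $n_*>2$, $\mathsf{V}_*=\{x:n(x)\le n_*\}$, $\mathsf{V}_*^c=\mathsf{V}\setminus\mathsf{V}_*$. For strictly increasing $\phi:(n_*,+\infty)\to(0,+\infty)$, $\mathbb{G}(n_*,\phi)$ is the family of graphs with $\rho(x,y)\ge\phi[\max\{n(x),n(y)\}]$ for all $x,y\in\mathsf{V}_*^c$. *)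

theory Defs
  imports "HOL-Analysis.Analysis"
begin

definition is_walk :: "('a \<Rightarrow> 'a \<Rightarrow> bool) \<Rightarrow> 'a \<Rightarrow> 'a \<Rightarrow> nat \<Rightarrow> bool" where
  "is_walk E x y k \<longleftrightarrow> (\<exists>p::nat \<Rightarrow> 'a. p 0 = x \<and> p k = y \<and> (\<forall>i<k. E (p i) (p (Suc i))))"

definition gdist :: "('a \<Rightarrow> 'a \<Rightarrow> bool) \<Rightarrow> 'a \<Rightarrow> 'a \<Rightarrow> nat" where
  "gdist E x y = (LEAST k. is_walk E x y k)"

definition deg :: "('a \<Rightarrow> 'a \<Rightarrow> bool) \<Rightarrow> 'a \<Rightarrow> nat" where
  "deg E x = card {y. E x y}"

definition cclf_graph :: "'a set \<Rightarrow> ('a \<Rightarrow> 'a \<Rightarrow> bool) \<Rightarrow> bool" where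
  "cclf_graph V E \<longleftrightarrow>
     V \<noteq> {} \<and> countable V \<and>
     (\<forall>x y. E x y \<longrightarrow> x \<in> V \<and> y \<in> V) \<and>
     (\<forall>x y. E x y \<longrightarrow> E y x) \<and>
     (\<forall>x. \<not> E x x) \<and>
     (\<forall>x\<in>V. finite {y. E x y}) \<and>
     (\<forall>x\<in>V. \<forall>y\<in>V. \<exists>k. is_walk E x y k)"

definition Theta :: "'a set \<Rightarrow> ('a \<Rightarrow> 'a \<Rightarrow> bool) \<Rightarrow> 'a \<Rightarrow> real \<Rightarrow> real \<Rightarrow> ennreal" where
  "Theta V E r \<alpha> \<theta> =
     (\<Sum>\<^sub>\<infinity>x\<in>V. \<Sum>\<^sub>\<infinity>y\<in>{y. E x y}.
        ennreal ((real (deg E x * deg E y)) powr \<theta> * exp (- \<alpha> * real (gdist E r x))))"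

definition Tsum :: "'a set \<Rightarrow> ('a \<Rightarrow> 'a \<Rightarrow> bool) \<Rightarrow> 'a \<Rightarrow> real \<Rightarrow> real \<Rightarrow> ennreal" where
  "Tsum V E x \<alpha> \<theta> =
     (\<Sum>\<^sub>\<infinity>y\<in>V. ennreal ((real (deg E y)) powr (1 + \<theta>) * exp (- \<alpha> * real (gdist E x y))))"

definition in_GG :: "'a set \<Rightarrow> ('a \<Rightarrow> 'a \<Rightarrow> bool) \<Rightarrow> nat \<Rightarrow> (real \<Rightarrow> real) \<Rightarrow> bool" where
  "in_GG V E nstar \<phi> \<longleftrightarrow>
     (\<forall>x\<in>V. \<forall>y\<in>V. deg E x > nstar \<longrightarrow> deg E y > nstar \<longrightarrow> x \<noteq> y \<longrightarrow>
        real (gdist E x y) \<ge> \<phi> (real (max (deg E x) (deg E y))))"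

end

theory Submission
  imports Defs
begin

lemma walk_extend:
  assumes "is_walk E x y k" "E y z"
  shows "is_walk E x z (Suc k)"
proof -
  obtain p where p: "p 0 = x" "p k = y" "\<forall>i<k. E (p i) (p (Suc i))"
    using assms(1) unfolding is_walk_def by blast
  define q where "q = (\<lambda>i. if i \<le> k then p i else z)"
  have "q 0 = x" "q (Suc k) = z" using p by (auto simp: q_def)
  moreover have "\<forall>i<Suc k. E (q i) (q (Suc i))"
  proof (intro allI impI)
    fix i assume "i < Suc k"
    then show "E (q i) (q (Suc i))"
      using p assms(2) by (cases "i < k") (auto simp: q_def less_Suc_eq)
  qed
  ultimately show ?thesis unfolding is_walk_def by blast
qed

lemma walk_one: "E x y \<Longrightarrow> is_walk E x y 1"
  unfolding is_walk_def by (rule exI[of _ "\<lambda>i. if i = 0 then x else y"]) auto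

lemma gdist_walk:
  assumes "cclf_graph V E" "x \<in> V" "y \<in> V"
  shows "is_walk E x y (gdist E x y)"
proof -
  obtain k where "is_walk E x y k" using assms unfolding cclf_graph_def by blast
  then show ?thesis unfolding gdist_def by (rule LeastI)
qed

lemma gdist_edge:
  assumes "cclf_graph V E" "r \<in> V" "y \<in> V" "E y x"
  shows "gdist E r x \<le> gdist E r y + 1"
proof -
  have "is_walk E r x (Suc (gdist E r y))"
    using walk_extend[OF gdist_walk[OF assms(1-3)] assms(4)] .
  then show ?thesis unfolding gdist_def by (metis Least_le Suc_eq_plus1)
qed

lemma gdist_one: "E x y \<Longrightarrow> gdist E x y \<le> 1"
  unfolding gdist_def by (rule Least_le) (rule walk_one)

theorem lemma5p3:
  fixes V :: "'a set" and E :: "'a \<Rightarrow> 'a \<Rightarrow> bool" and r :: 'a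
    and nstar :: nat and \<phi> :: "real \<Rightarrow> real" and \<alpha> \<theta> :: real
  assumes "cclf_graph V E" and "r \<in> V"
    and "nstar > 2"
    and "strict_mono_on {real nstar<..} \<phi>"
    and "\<forall>t > real nstar. \<phi> t > 0"
    and "\<phi> (real nstar + 1) > 1"
    and "in_GG V E nstar \<phi>"
    and "\<theta> > 0" and "\<alpha> > 0"
  shows "Theta V E r \<alpha> \<theta> \<le> ennreal (real nstar powr \<theta> * (exp \<alpha> + 1)) * Tsum V E r \<alpha> \<theta>"
proof -
  note G = assms(1)[unfolded cclf_graph_def]
  have Esym: "\<forall>x y. E x y \<longrightarrow> E y x" and Eirr: "\<forall>x. \<not> E x x"
    and EV: "\<forall>x y. E x y \<longrightarrow> x \<in> V \<and> y \<in> V" and Efin: "\<forall>x\<in>V. finite {y. E x y}"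
    using G by blast+
  define N where "N x = {y. E x y}" for x
  define d where "d x = gdist E r x" for x
  define c where "c = real nstar powr \<theta>"
  define K where "K = exp \<alpha>"
  define f where "f x y = real (deg E x * deg E y) powr \<theta> * exp (- \<alpha> * real (d x))" for x y
  define w where "w y = real (deg E y) powr (1 + \<theta>) * exp (- \<alpha> * real (d y))" for y
  have finN: "x \<in> V \<Longrightarrow> finite (N x)" for x using Efin unfolding N_def by blast
  have NV: "x \<in> N y \<Longrightarrow> x \<in> V \<and> y \<in> V" for x y using EV unfolding N_def by blast
  have symN: "x \<in> N y \<longleftrightarrow> y \<in> N x" for x y using Esym unfolding N_def by blast
  have cardN: "card (N x) = deg E x" for x unfolding N_def deg_def by simp
  have c0: "c \<ge> 0" unfolding c_def by simp
  have K0: "K \<ge> 0" unfolding K_def by simp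
  have f0: "f x y \<ge> 0" for x y unfolding f_def by simp
  have w0: "w x \<ge> 0" for x unfolding w_def by simp
  have lowE: "deg E y \<le> nstar" if "y \<in> N x" "deg E x > nstar" for x y
  proof (rule ccontr)
    assume h: "\<not> deg E y \<le> nstar"
    have xy: "x \<in> V" "y \<in> V" using NV[of y x] that(1) by auto
    have xy2: "x \<noteq> y" using Eirr that(1) unfolding N_def by auto
    have "real (gdist E x y) \<ge> \<phi> (real (max (deg E x) (deg E y)))"
    proof -
      have "\<forall>x\<in>V. \<forall>y\<in>V. deg E x > nstar \<longrightarrow> deg E y > nstar \<longrightarrow> x \<noteq> y \<longrightarrow>
        real (gdist E x y) \<ge> \<phi> (real (max (deg E x) (deg E y)))"
        using assms(7) unfolding in_GG_def .
      then have "deg E x > nstar \<longrightarrow> deg E y > nstar \<longrightarrow> x \<noteq> y \<longrightarrow>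
        real (gdist E x y) \<ge> \<phi> (real (max (deg E x) (deg E y)))"
        using xy by blast
      moreover have "deg E y > nstar" using h by simp
      ultimately show ?thesis using xy2 that(2) by blast
    qed
    moreover have "gdist E x y \<le> 1" using gdist_one[of E x y] that(1) unfolding N_def by simp
    moreover have "\<phi> (real (max (deg E x) (deg E y))) > 1"
    proof -
      let ?m = "real (max (deg E x) (deg E y))"
      have m: "?m \<ge> real nstar + 1" using that(2) by auto
      show ?thesis
      proof (cases "?m = real nstar + 1")
        case True then show ?thesis using assms(6) by simp
      next
        case False
        then have "\<phi> (real nstar + 1) < \<phi> ?m"
          using m by (intro strict_mono_onD[OF assms(4)]) auto
        then show ?thesis using assms(6) by simp
      qed
    qed
    ultimately show False by simp
  qed
  have dK: "exp (- \<alpha> * real (d x)) \<le> K * exp (- \<alpha> * real (d y))" if "y \<in> N x" for x y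
  proof -
    have xV: "x \<in> V" using NV[of y x] that by auto
    have "d y \<le> d x + 1" unfolding d_def
      using gdist_edge[OF assms(1,2) xV, of y] that unfolding N_def by simp
    then have "real (d y) \<le> real (d x) + 1" by linarith
    then have "\<alpha> * real (d y) \<le> \<alpha> * (real (d x) + 1)" using assms(9)
      by (intro mult_left_mono) auto
    then have "- \<alpha> * real (d x) \<le> \<alpha> + - \<alpha> * real (d y)"
      by (simp add: algebra_simps)
    then have "exp (- \<alpha> * real (d x)) \<le> exp (\<alpha> + - \<alpha> * real (d y))" by simp
    then show ?thesis unfolding K_def by (simp only: exp_add)
  qed
  define A where "A x y = (if deg E x \<le> nstar then c * K * (real (deg E y) powr \<theta> * exp (- \<alpha> * real (d y))) else 0)" for x y :: 'a
  define B where "B x y = (if deg E x \<le> nstar then 0 else c * (real (deg E x) powr \<theta> * exp (- \<alpha> * real (d x))))" for x y :: 'a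
  have fAB: "f x y \<le> A x y + B x y" if "y \<in> N x" for x y
  proof (cases "deg E x \<le> nstar")
    case True
    have "f x y \<le> (real nstar * real (deg E y)) powr \<theta> * exp (- \<alpha> * real (d x))"
      unfolding f_def using True assms(8)
      by (intro mult_right_mono powr_mono2) (auto intro: mult_right_mono)
    also have "\<dots> = c * (real (deg E y) powr \<theta>) * exp (- \<alpha> * real (d x))"
      unfolding c_def by (simp add: powr_mult)
    also have "\<dots> \<le> c * (real (deg E y) powr \<theta>) * (K * exp (- \<alpha> * real (d y)))"
      using dK[OF that] c0 by (intro mult_left_mono) auto
    finally show ?thesis using True unfolding A_def B_def by (simp add: algebra_simps)
  next
    case False
    have "f x y \<le> (real (deg E x) * real nstar) powr \<theta> * exp (- \<alpha> * real (d x))"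
      unfolding f_def using lowE[OF that] False assms(8)
      by (intro mult_right_mono powr_mono2) (auto intro: mult_left_mono)
    also have "\<dots> = c * (real (deg E x) powr \<theta> * exp (- \<alpha> * real (d x)))"
      unfolding c_def by (simp add: powr_mult)
    finally show ?thesis using False unfolding A_def B_def by simp
  qed
  have Tdef: "Tsum V E r \<alpha> \<theta> = (\<Sum>\<^sub>\<infinity>y\<in>V. ennreal (w y))"
    unfolding Tsum_def w_def d_def by simp
  have Thdef: "Theta V E r \<alpha> \<theta> = (\<Sum>\<^sub>\<infinity>x\<in>V. ennreal (\<Sum>y\<in>N x. f x y))"
    unfolding Theta_def
  proof (rule infsum_cong)
    fix x assume "x \<in> V"
    then show "(\<Sum>\<^sub>\<infinity>y\<in>{y. E x y}. ennreal (real (deg E x * deg E y) powr \<theta> * exp (- \<alpha> * real (gdist E r x))))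
        = ennreal (\<Sum>y\<in>N x. f x y)"
      using finN[of x] f0 unfolding N_def f_def d_def by (simp add: sum_ennreal)
  qed
  show ?thesis
    unfolding Thdef
  proof (rule infsum_le_finite_sums)
    show "(\<lambda>x. ennreal (\<Sum>y\<in>N x. f x y)) summable_on V"
      by (intro nonneg_summable_on_complete) simp
    fix F assume F: "finite F" "F \<subseteq> V"
    define H where "H = F \<union> (\<Union>x\<in>F. N x)"
    have finH: "finite H" unfolding H_def using F finN by auto
    have HV: "H \<subseteq> V" unfolding H_def using F NV by auto
    have NH: "x \<in> F \<Longrightarrow> N x = {y \<in> H. E x y}" for x unfolding H_def N_def by auto
    have sumA: "(\<Sum>x\<in>F. \<Sum>y\<in>N x. A x y) \<le> c * K * (\<Sum>y\<in>H. w y)"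
    proof -
      define h where "h y = c * K * (real (deg E y) powr \<theta> * exp (- \<alpha> * real (d y)))" for y
      have h0: "h y \<ge> 0" for y unfolding h_def using c0 K0 by simp
      have "(\<Sum>x\<in>F. \<Sum>y\<in>N x. A x y) \<le> (\<Sum>x\<in>F. \<Sum>y\<in>N x. h y)"
        by (intro sum_mono) (auto simp: A_def h_def c0 K0)
      also have "\<dots> = (\<Sum>x\<in>F. \<Sum>y\<in>{y \<in> H. E x y}. h y)"
        using NH by (intro sum.cong) auto
      also have "\<dots> = (\<Sum>y\<in>H. \<Sum>x\<in>{x \<in> F. E x y}. h y)"
        by (rule sum.swap_restrict[OF F(1) finH])
      also have "\<dots> = (\<Sum>y\<in>H. real (card {x \<in> F. E x y}) * h y)" by simp
      also have "\<dots> \<le> (\<Sum>y\<in>H. real (deg E y) * h y)"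
      proof (intro sum_mono mult_right_mono h0)
        fix y assume "y \<in> H"
        then have "y \<in> V" using HV by auto
        then have "finite (N y)" by (rule finN)
        moreover have "{x \<in> F. E x y} \<subseteq> N y" using symN unfolding N_def by auto
        ultimately show "real (card {x \<in> F. E x y}) \<le> real (deg E y)"
          using card_mono cardN by (metis of_nat_le_iff)
      qed
      also have "\<dots> = (\<Sum>y\<in>H. c * K * w y)"
      proof (intro sum.cong refl)
        fix y
        have "real (deg E y) * real (deg E y) powr \<theta> = real (deg E y) powr (1 + \<theta>)"
          by (cases "deg E y = 0") (auto simp: powr_add)
        then show "real (deg E y) * h y = c * K * w y"
          unfolding h_def w_def by (metis (no_types, opaque_lifting) mult.assoc mult.left_commute)
      qed
      finally show ?thesis by (simp add: sum_distrib_left)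
    qed
    have sumB: "(\<Sum>x\<in>F. \<Sum>y\<in>N x. B x y) \<le> c * (\<Sum>y\<in>H. w y)"
    proof -
      have "(\<Sum>x\<in>F. \<Sum>y\<in>N x. B x y) = (\<Sum>x\<in>F. real (deg E x) * B x x)"
        by (intro sum.cong refl) (simp add: B_def cardN)
      also have "\<dots> \<le> (\<Sum>x\<in>F. c * w x)"
      proof (intro sum_mono)
        fix x
        have "real (deg E x) * real (deg E x) powr \<theta> = real (deg E x) powr (1 + \<theta>)"
          by (cases "deg E x = 0") (auto simp: powr_add)
        then have eq: "real (deg E x) * (c * (real (deg E x) powr \<theta> * exp (- \<alpha> * real (d x)))) = c * w x"
          unfolding w_def by (metis (no_types, opaque_lifting) mult.assoc mult.left_commute)
        show "real (deg E x) * B x x \<le> c * w x"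
        proof (cases "deg E x \<le> nstar")
          case True
          then show ?thesis unfolding B_def using c0 w0 by simp
        next
          case False
          then have "B x x = c * (real (deg E x) powr \<theta> * exp (- \<alpha> * real (d x)))"
            unfolding B_def by simp
          then show ?thesis using eq by (simp only:)
        qed
      qed
      also have "\<dots> \<le> (\<Sum>x\<in>H. c * w x)"
        using finH c0 w0 by (intro sum_mono2) (auto simp: H_def)
      finally show ?thesis by (simp add: sum_distrib_left)
    qed
    have "(\<Sum>x\<in>F. \<Sum>y\<in>N x. f x y) \<le> (\<Sum>x\<in>F. \<Sum>y\<in>N x. A x y + B x y)"
      by (intro sum_mono fAB)
    also have "\<dots> \<le> c * (K + 1) * (\<Sum>y\<in>H. w y)"
      using sumA sumB by (simp add: sum.distrib algebra_simps)
    finally have le: "(\<Sum>x\<in>F. \<Sum>y\<in>N x. f x y) \<le> c * (K + 1) * (\<Sum>y\<in>H. w y)" .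
    have "(\<Sum>x\<in>F. ennreal (\<Sum>y\<in>N x. f x y)) = ennreal (\<Sum>x\<in>F. \<Sum>y\<in>N x. f x y)"
      using f0 by (intro sum_ennreal) (simp add: sum_nonneg)
    also have "\<dots> \<le> ennreal (c * (K + 1) * (\<Sum>y\<in>H. w y))" using le by (rule ennreal_leI)
    also have "\<dots> = ennreal (c * (K + 1)) * (\<Sum>y\<in>H. ennreal (w y))"
      using c0 K0 w0 by (simp add: ennreal_mult sum_nonneg)
    also have "\<dots> \<le> ennreal (c * (K + 1)) * (\<Sum>\<^sub>\<infinity>y\<in>V. ennreal (w y))"
    proof (intro mult_left_mono)
      have "(\<Sum>y\<in>H. ennreal (w y)) = (\<Sum>\<^sub>\<infinity>y\<in>H. ennreal (w y))" using finH by simp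
      also have "\<dots> \<le> (\<Sum>\<^sub>\<infinity>y\<in>V. ennreal (w y))"
        using HV by (intro infsum_mono_neutral nonneg_summable_on_complete) auto
      finally show "(\<Sum>y\<in>H. ennreal (w y)) \<le> (\<Sum>\<^sub>\<infinity>y\<in>V. ennreal (w y))" .
    qed simp
    finally show "(\<Sum>x\<in>F. ennreal (\<Sum>y\<in>N x. f x y)) \<le> ennreal (real nstar powr \<theta> * (exp \<alpha> + 1)) * Tsum V E r \<alpha> \<theta>"
      unfolding Tdef c_def K_def .
  qed
qed

end
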